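(* Let $X$ be a real Banach space. Consider: (1) $X$ is UR. (2) $d(Q_{S_X}(x,\frac1n),Q_{S_X}(x',\frac1n))\to\|x-x'\|$ uniformly on $(x,x')\in S_X\times S_X$. (3) $d(Q_{S_X}(x,\frac1n),Q_{S_X}(-x,\frac1n))\to2$ uniformly on $x\in S_X$. Then $(1)\Rightarrow(2)\Rightarrow(3)$.
   Context: $B_X,S_X$ are the closed unit ball and unit sphere of $X$. For non-empty bounded $F$, $x\in X$, $\delta\ge0$: $r(F,x)=\sup_{y\in F}\|x-y\|$, $Q_F(x,\delta)=\{y\in F:\|x-y\|\ge r(F,x)-\delta\}$. For non-empty sets $A,B$, $d(A,B)=\inf\{\|a-b\|:a\in A,b\in B\}$. $X$ is UR if $\|x_n-y_n\|\to0$ whenever $(x_n),(y_n)\subseteq S_X$ with $\|\frac{x_n+y_n}{2}\|\to1$. *)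

theory Defs
  imports "HOL-Analysis.Analysis"
begin

definition rad :: "'a::real_normed_vector set \<Rightarrow> 'a \<Rightarrow> real" where
  "rad F x = (SUP y\<in>F. norm (x - y))"

definition Qfar :: "'a::real_normed_vector set \<Rightarrow> 'a \<Rightarrow> real \<Rightarrow> 'a set" where
  "Qfar F x \<delta> = {y \<in> F. norm (x - y) \<ge> rad F x - \<delta>}"

definition UR :: "'a::real_normed_vector itself \<Rightarrow> bool" where
  "UR _ \<longleftrightarrow> (\<forall>(x::nat \<Rightarrow> 'a) y.
      (\<forall>n. x n \<in> sphere 0 1 \<and> y n \<in> sphere 0 1) \<longrightarrow>
      (\<lambda>n. norm ((1/2) *\<^sub>R (x n + y n))) \<longlonglongrightarrow> 1 \<longrightarrow>
      (\<lambda>n. norm (x n - y n)) \<longlonglongrightarrow> 0)"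

end

theory Submission
  imports Defs
begin

lemma rad_sphere:
  fixes x :: "'a::real_normed_vector"
  assumes "x \<in> sphere 0 1"
  shows "rad (sphere 0 1) x = 2"
  unfolding rad_def
proof (rule cSup_eq_maximum)
  have "norm (x - (-x)) = norm (2 *\<^sub>R x)" by (simp add: scaleR_2)
  then have "norm (x - (-x)) = 2" using assms by simp
  moreover have "-x \<in> sphere 0 1" using assms by simp
  ultimately show "2 \<in> (\<lambda>y. norm (x - y)) ` sphere 0 1" by (metis rev_image_eqI)
next
  fix r assume "r \<in> (\<lambda>y. norm (x - y)) ` sphere 0 1"
  then obtain y where y: "y \<in> sphere 0 1" "r = norm (x - y)" by auto
  have "norm (x - y) \<le> norm x + norm y" by (rule norm_triangle_ineq4)
  then show "r \<le> 2" using y assms by simp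
qed

lemma UR_eps:
  fixes e :: real
  assumes U: "UR TYPE('a::real_normed_vector)" and e: "e > 0"
  shows "\<exists>d>0. \<forall>u\<in>sphere (0::'a) 1. \<forall>v\<in>sphere 0 1.
           norm ((1/2) *\<^sub>R (u + v)) > 1 - d \<longrightarrow> norm (u - v) < e"
proof (rule ccontr)
  assume "\<not> ?thesis"
  then have "\<forall>n::nat. \<exists>u v. u\<in>sphere (0::'a) 1 \<and> v\<in>sphere 0 1 \<and>
           norm ((1/2) *\<^sub>R (u + v)) > 1 - 1/(real n + 1) \<and> norm (u - v) \<ge> e"
    by (metis not_less divide_pos_pos of_nat_less_0_iff add_pos_nonneg zero_less_one of_nat_0_le_iff
          add.commute of_nat_Suc zero_less_Suc)
  then obtain u v where uv: "\<And>n. u n \<in> sphere (0::'a) 1 \<and> v n \<in> sphere 0 1 \<and>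
           norm ((1/2) *\<^sub>R (u n + v n)) > 1 - 1/(real n + 1) \<and> norm (u n - v n) \<ge> e"
    by metis
  have le: "norm ((1/2) *\<^sub>R (u n + v n)) \<le> 1" for n
  proof -
    have "norm (u n + v n) \<le> norm (u n) + norm (v n)" by (rule norm_triangle_ineq)
    then show ?thesis using uv[of n] by simp
  qed
  have "(\<lambda>n. 1 - 1/(real n + 1)) \<longlonglongrightarrow> 1"
  proof -
    have "(\<lambda>n. 1 - inverse (real (Suc n))) \<longlonglongrightarrow> 1 - 0"
      by (intro tendsto_diff tendsto_const LIMSEQ_inverse_real_of_nat)
    then show ?thesis by (simp add: inverse_eq_divide add.commute)
  qed
  moreover have ev1: "eventually (\<lambda>n. 1 - 1/(real n+1) \<le> norm ((1/2) *\<^sub>R (u n + v n))) sequentially"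
    by (intro always_eventually allI) (metis uv less_imp_le)
  moreover have ev2: "eventually (\<lambda>n. norm ((1/2) *\<^sub>R (u n + v n)) \<le> 1) sequentially"
    by (intro always_eventually allI le)
  ultimately have "(\<lambda>n. norm ((1/2) *\<^sub>R (u n + v n))) \<longlonglongrightarrow> 1"
    using tendsto_sandwich[OF ev1 ev2 _ tendsto_const] by blast
  then have "(\<lambda>n. norm (u n - v n)) \<longlonglongrightarrow> 0"
    using U uv unfolding UR_def by blast
  then obtain n where "norm (u n - v n) < e"
    using LIMSEQ_D[OF _ e] by fastforce
  then show False using uv[of n] by simp
qed

theorem theorem3p12:
  assumes "\<exists>z::'a::{real_normed_vector,banach}. z \<noteq> 0"
  shows "(UR TYPE('a) \<longrightarrow>
           (\<forall>\<epsilon>>0. \<exists>N. \<forall>n\<ge>N. \<forall>x\<in>sphere (0::'a) 1. \<forall>x'\<in>sphere 0 1.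
              \<bar>setdist (Qfar (sphere 0 1) x (1 / real n)) (Qfar (sphere 0 1) x' (1 / real n))
                - norm (x - x')\<bar> < \<epsilon>))
       \<and> ((\<forall>\<epsilon>>0. \<exists>N. \<forall>n\<ge>N. \<forall>x\<in>sphere (0::'a) 1. \<forall>x'\<in>sphere 0 1.
              \<bar>setdist (Qfar (sphere 0 1) x (1 / real n)) (Qfar (sphere 0 1) x' (1 / real n))
                - norm (x - x')\<bar> < \<epsilon>)
          \<longrightarrow>
          (\<forall>\<epsilon>>0. \<exists>N. \<forall>n\<ge>N. \<forall>x\<in>sphere (0::'a) 1.
              \<bar>setdist (Qfar (sphere 0 1) x (1 / real n)) (Qfar (sphere 0 1) (-x) (1 / real n))
                - 2\<bar> < \<epsilon>))"
proof (intro conjI impI allI)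
  fix \<epsilon> :: real
  assume H: "\<forall>\<epsilon>>0. \<exists>N. \<forall>n\<ge>N. \<forall>x\<in>sphere (0::'a) 1. \<forall>x'\<in>sphere 0 1.
              \<bar>setdist (Qfar (sphere 0 1) x (1 / real n)) (Qfar (sphere 0 1) x' (1 / real n))
                - norm (x - x')\<bar> < \<epsilon>" and e: "\<epsilon> > 0"
  then obtain N where N: "\<forall>n\<ge>N. \<forall>x\<in>sphere (0::'a) 1. \<forall>x'\<in>sphere 0 1.
              \<bar>setdist (Qfar (sphere 0 1) x (1 / real n)) (Qfar (sphere 0 1) x' (1 / real n))
                - norm (x - x')\<bar> < \<epsilon>" by blast
  show "\<exists>N. \<forall>n\<ge>N. \<forall>x\<in>sphere (0::'a) 1.
              \<bar>setdist (Qfar (sphere 0 1) x (1 / real n)) (Qfar (sphere 0 1) (-x) (1 / real n))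
                - 2\<bar> < \<epsilon>"
  proof (intro exI allI impI ballI)
    fix n x assume n: "N \<le> n" and x: "x \<in> sphere (0::'a) 1"
    have "norm (x - - x) = norm (2 *\<^sub>R x)" by (simp add: scaleR_2)
    then have "norm (x - - x) = 2" using x by simp
    moreover have "-x \<in> sphere (0::'a) 1" using x by simp
    ultimately show "\<bar>setdist (Qfar (sphere 0 1) x (1 / real n)) (Qfar (sphere 0 1) (-x) (1 / real n))
                - 2\<bar> < \<epsilon>" using N[rule_format, OF n x] by metis
  qed
next
  fix \<epsilon> :: real
  assume U: "UR TYPE('a)" and e: "\<epsilon> > 0"
  obtain d where d: "d > 0" and dU: "\<forall>u\<in>sphere (0::'a) 1. \<forall>v\<in>sphere 0 1.
           norm ((1/2) *\<^sub>R (u + v)) > 1 - d \<longrightarrow> norm (u - v) < \<epsilon>/3"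
    using UR_eps[OF U, of "\<epsilon>/3"] e by auto
  obtain N :: nat where N: "real N > 1/d" using reals_Archimedean2 by blast
  have Npos: "real N > 0" using N d by (smt (verit) divide_pos_pos)
  have close: "norm (y + x) < \<epsilon>/3"
    if n: "N \<le> n" and x: "x \<in> sphere (0::'a) 1" and y: "y \<in> Qfar (sphere 0 1) x (1 / real n)"
    for n x y
  proof -
    have ys: "y \<in> sphere 0 1" and yd: "norm (x - y) \<ge> 2 - 1/real n"
      using y rad_sphere[OF x] unfolding Qfar_def by auto
    have "real n \<ge> real N" using n by simp
    then have "1 / real n \<le> 1 / real N" using Npos by (simp add: frac_le)
    also have "\<dots> < d" using N Npos d by (simp add: divide_less_eq mult.commute)
    finally have "1/real n < d" .
    then have "norm ((1/2) *\<^sub>R (x + (-y))) > 1 - d"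
      using yd d by (simp add: norm_minus_commute)
    moreover have "-y \<in> sphere (0::'a) 1" using ys by simp
    ultimately have "norm (x - (-y)) < \<epsilon>/3" using dU x by blast
    then show ?thesis by (simp add: add.commute)
  qed
  show "\<exists>N. \<forall>n\<ge>N. \<forall>x\<in>sphere (0::'a) 1. \<forall>x'\<in>sphere 0 1.
              \<bar>setdist (Qfar (sphere 0 1) x (1 / real n)) (Qfar (sphere 0 1) x' (1 / real n))
                - norm (x - x')\<bar> < \<epsilon>"
  proof (intro exI[of _ N] allI impI ballI)
    fix n x x' assume n: "N \<le> n" and x: "x \<in> sphere (0::'a) 1" and x': "x' \<in> sphere (0::'a) 1"
    have mem: "-z \<in> Qfar (sphere 0 1) z (1 / real n)" if "z \<in> sphere (0::'a) 1" for z
    proof -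
      have "norm (z - - z) = norm (2 *\<^sub>R z)" by (simp add: scaleR_2)
      then have "norm (z - - z) = 2" using that by simp
      moreover have "1 / real n \<ge> 0" by simp
      ultimately show ?thesis using that rad_sphere[OF that] unfolding Qfar_def by simp
    qed
    have up: "setdist (Qfar (sphere 0 1) x (1 / real n)) (Qfar (sphere 0 1) x' (1 / real n))
              \<le> norm (x - x')"
      using setdist_le_dist[OF mem[OF x] mem[OF x']] by (simp add: dist_norm norm_minus_commute)
    have lo: "norm (x - x') - 2*\<epsilon>/3 \<le>
        setdist (Qfar (sphere 0 1) x (1 / real n)) (Qfar (sphere 0 1) x' (1 / real n))"
    proof (rule le_setdistI)
      show "Qfar (sphere 0 1) x (1 / real n) \<noteq> {}" using mem[OF x] by blast
      show "Qfar (sphere 0 1) x' (1 / real n) \<noteq> {}" using mem[OF x'] by blast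
      fix a b assume a: "a \<in> Qfar (sphere 0 1) x (1 / real n)"
        and b: "b \<in> Qfar (sphere 0 1) x' (1 / real n)"
      have ca: "norm (a + x) < \<epsilon>/3" by (rule close[OF n x a])
      have cb: "norm (b + x') < \<epsilon>/3" by (rule close[OF n x' b])
      have "x - x' = (a + x) - (b + x') + (b - a)" by (simp add: algebra_simps)
      then have "norm (x - x') \<le> norm ((a + x) - (b + x')) + norm (b - a)"
        using norm_triangle_ineq[of "(a + x) - (b + x')" "b - a"] by simp
      moreover have "norm ((a + x) - (b + x')) \<le> norm (a + x) + norm (b + x')"
        by (rule norm_triangle_ineq4)
      ultimately have "norm (x - x') \<le> norm (a + x) + norm (b + x') + norm (b - a)"
        by linarith
      then show "norm (x - x') - 2*\<epsilon>/3 \<le> dist a b" using ca cb by (simp add: dist_norm norm_minus_commute)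
    qed
    show "\<bar>setdist (Qfar (sphere 0 1) x (1 / real n)) (Qfar (sphere 0 1) x' (1 / real n))
                - norm (x - x')\<bar> < \<epsilon>" using up lo e by linarith
  qed
qed

end
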